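(* Let $p\in\mathbb Z$ with $1\le p\le m$, let $M$ be a polynomial $\mathfrak{gl}_{m|n}$-module and let $\lambda$ be a $(p|n)$-hook partition. Then $$\overline{\mathfrak{tr}}_{p|n}(M)^{\rm sing}_{\bar\lambda^{p|n}}=M^{\sigma_p\text{-}{\rm sing}}_{\bar\lambda^{\sigma_p}}.$$
   Context: $I_{m|n}=\{1,\dots,m\}\cup\{\tfrac12,\dots,n-\tfrac12\}$ with standard order $1<\dots<m<\tfrac12<\dots<n-\tfrac12$ (integers even, half-integers odd); $\mathfrak{gl}_{m|n}$ has basis $E_{i,j}$, Cartan subalgebra $\mathfrak h_{m|n}$ spanned by $E_{i,i}$, dual basis $\epsilon_i$. A module is polynomial if $\mathfrak h_{m|n}$-semisimple with weights in $\sum_{i\in I_{m|n}}\mathbb Z_{\ge0}\epsilon_i$. $\mathfrak{gl}_{p|n}\subseteq\mathfrak{gl}_{m|n}$ is the span of $E_{i,j}$ with $i,j\in I_{p|n}=\{1,\dots,p\}\cup\{\tfrac12,\dots,n-\tfrac12\}$, and $\overline{\mathfrak{tr}}_{p|n}(M)=\bigoplus_\nu M_\nu$, the sum over weights $\nu$ of $M$ with $\nu(E_{i,i})=0$ for $i=p+1,\dots,m$, a $\mathfrak{gl}_{p|n}$-module. For a $(p|n)$-hook partition $\lambda$ ($\lambda_{p+1}\le n$), with conjugate $\lambda'$ and $\langle x\rangle=\max(x,0)$: $\bar\lambda^{p|n}=\sum_{i=1}^p\lambda_i\epsilon_i+\sum_{i=1}^n\langle\lambda'_i-p\rangle\epsilon_{i-1/2}$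 (regarded as a weight of $\mathfrak{gl}_{m|n}$ vanishing on $E_{i,i}$, $i>p$), and $\bar\lambda^{\sigma_p}=\sum_{i=1}^p\lambda_i\epsilon_i+\sum_{i=1}^n\langle\lambda'_i-p\rangle\epsilon_{i-1/2}+\sum_{i=p+1}^m\langle\lambda_i-n\rangle\epsilon_i$. For a $\mathfrak{gl}_{p|n}$-module $N$, $N^{\rm sing}_\mu=\{v\in N_\mu: E_{i,j}v=0 \text{ for } i<j \text{ in } I_{p|n}\}$ (standard order). Let $<_{\sigma_p}$ be the total order $1<\dots<p<\tfrac12<\dots<n-\tfrac12<p+1<\dots<m$ on $I_{m|n}$; $M^{\sigma_p\text{-sing}}_\mu=\{v\in M_\mu: E_{i,j}v=0 \text{ for all } i<_{\sigma_p}j\}$. *)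

theory Defs
  imports Complex_Main
begin

(* Index set I_{m|n}: Ev i stands for the even index i (1 <= i <= m),
   Od k stands for the odd (half-integer) index k - 1/2 (1 <= k <= n). *)
datatype idx = Ev nat | Od nat

definition Idx :: "nat \<Rightarrow> nat \<Rightarrow> idx set" where
  "Idx m n = {Ev i |i. 1 \<le> i \<and> i \<le> m} \<union> {Od k |k. 1 \<le> k \<and> k \<le> n}"

fun ipar :: "idx \<Rightarrow> bool" where
  "ipar (Ev _) = False"
| "ipar (Od _) = True"

fun std_less :: "idx \<Rightarrow> idx \<Rightarrow> bool" where
  "std_less (Ev a) (Ev b) = (a < b)"
| "std_less (Ev a) (Od b) = True"
| "std_less (Od a) (Ev b) = False"
| "std_less (Od a) (Od b) = (a < b)"

(* order <_{sigma_p}: 1 < ... < p < 1/2 < ... < n - 1/2 < p+1 < ... < m *)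
fun sig_less :: "nat \<Rightarrow> idx \<Rightarrow> idx \<Rightarrow> bool" where
  "sig_less p (Ev a) (Ev b) = (if a \<le> p then (p < b \<or> a < b) else (p < b \<and> a < b))"
| "sig_less p (Ev a) (Od b) = (a \<le> p)"
| "sig_less p (Od a) (Ev b) = (p < b)"
| "sig_less p (Od a) (Od b) = (a < b)"

(* A (Z/2-graded) gl_{m|n}-module over the complex numbers: a complex vector
   space with scalar multiplication sc, a parity decomposition V False (+) V True,
   and linear operators E i j (the action of E_{i,j}) satisfying the
   supercommutator relations
   [E_ij, E_kl] = delta_jk E_il - (-1)^{(|i|+|j|)(|k|+|l|)} delta_li E_kj. *)
definition is_glmn_module ::
  "nat \<Rightarrow> nat \<Rightarrow> (complex \<Rightarrow> 'v::ab_group_add \<Rightarrow> 'v) \<Rightarrow> (idx \<Rightarrow> idx \<Rightarrow> 'v \<Rightarrow> 'v)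
     \<Rightarrow> (bool \<Rightarrow> 'v set) \<Rightarrow> bool" where
  "is_glmn_module m n sc E V \<longleftrightarrow>
     vector_space sc
   \<and> (\<forall>i\<in>Idx m n. \<forall>j\<in>Idx m n. Vector_Spaces.linear sc sc (E i j))
   \<and> module.subspace sc (V False) \<and> module.subspace sc (V True)
   \<and> V False \<inter> V True = {0}
   \<and> (\<forall>v. \<exists>a b. a \<in> V False \<and> b \<in> V True \<and> v = a + b)
   \<and> (\<forall>i\<in>Idx m n. \<forall>j\<in>Idx m n. \<forall>a. E i j ` V a \<subseteq> V (a \<noteq> (ipar i \<noteq> ipar j)))
   \<and> (\<forall>i\<in>Idx m n. \<forall>j\<in>Idx m n. \<forall>k\<in>Idx m n. \<forall>l\<in>Idx m n. \<forall>v.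
        (let s = (\<lambda>x. if (ipar i \<noteq> ipar j) \<and> (ipar k \<noteq> ipar l) then - x else x) in
         E i j (E k l v) - s (E k l (E i j v))
           = (if j = k then E i l v else 0) - s (if l = i then E k j v else 0)))"

definition weight_space ::
  "nat \<Rightarrow> nat \<Rightarrow> (complex \<Rightarrow> 'v::ab_group_add \<Rightarrow> 'v) \<Rightarrow> (idx \<Rightarrow> idx \<Rightarrow> 'v \<Rightarrow> 'v)
     \<Rightarrow> (idx \<Rightarrow> complex) \<Rightarrow> 'v set" where
  "weight_space m n sc E \<mu> = {v. \<forall>i\<in>Idx m n. E i i v = sc (\<mu> i) v}"

definition polynomial_module ::
  "nat \<Rightarrow> nat \<Rightarrow> (complex \<Rightarrow> 'v::ab_group_add \<Rightarrow> 'v) \<Rightarrow> (idx \<Rightarrow> idx \<Rightarrow> 'v \<Rightarrow> 'v) \<Rightarrow> bool" where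
  "polynomial_module m n sc E \<longleftrightarrow>
     module.span sc (\<Union>\<mu>. weight_space m n sc E \<mu>) = UNIV
   \<and> (\<forall>\<mu>. weight_space m n sc E \<mu> \<noteq> {0} \<longrightarrow> (\<forall>i\<in>Idx m n. \<mu> i \<in> \<nat>))"

definition trbar ::
  "nat \<Rightarrow> nat \<Rightarrow> nat \<Rightarrow> (complex \<Rightarrow> 'v::ab_group_add \<Rightarrow> 'v) \<Rightarrow> (idx \<Rightarrow> idx \<Rightarrow> 'v \<Rightarrow> 'v) \<Rightarrow> 'v set" where
  "trbar m n p sc E = module.span sc
     (\<Union>{weight_space m n sc E \<nu> |\<nu>. \<forall>i. p < i \<and> i \<le> m \<longrightarrow> \<nu> (Ev i) = 0})"

definition tr_sing ::
  "nat \<Rightarrow> nat \<Rightarrow> nat \<Rightarrow> (complex \<Rightarrow> 'v::ab_group_add \<Rightarrow> 'v) \<Rightarrow> (idx \<Rightarrow> idx \<Rightarrow> 'v \<Rightarrow> 'v)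
     \<Rightarrow> (idx \<Rightarrow> complex) \<Rightarrow> 'v set" where
  "tr_sing m n p sc E \<mu> = {v \<in> trbar m n p sc E.
      (\<forall>i\<in>Idx p n. E i i v = sc (\<mu> i) v)
    \<and> (\<forall>i\<in>Idx p n. \<forall>j\<in>Idx p n. std_less i j \<longrightarrow> E i j v = 0)}"

definition sigma_sing ::
  "nat \<Rightarrow> nat \<Rightarrow> nat \<Rightarrow> (complex \<Rightarrow> 'v::ab_group_add \<Rightarrow> 'v) \<Rightarrow> (idx \<Rightarrow> idx \<Rightarrow> 'v \<Rightarrow> 'v)
     \<Rightarrow> (idx \<Rightarrow> complex) \<Rightarrow> 'v set" where
  "sigma_sing m n p sc E \<mu> = {v \<in> weight_space m n sc E \<mu>.
      \<forall>i\<in>Idx m n. \<forall>j\<in>Idx m n. sig_less p i j \<longrightarrow> E i j v = 0}"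

(* partitions as functions nat => nat, 1-indexed (lambda_1 >= lambda_2 >= ...),
   finitely supported, with the unused entry lambda 0 = 0 *)
definition is_partition :: "(nat \<Rightarrow> nat) \<Rightarrow> bool" where
  "is_partition lam \<longleftrightarrow> lam 0 = 0 \<and> (\<forall>i\<ge>1. lam (Suc i) \<le> lam i) \<and> finite {i. lam i \<noteq> 0}"

definition hook_partition :: "nat \<Rightarrow> nat \<Rightarrow> (nat \<Rightarrow> nat) \<Rightarrow> bool" where
  "hook_partition p n lam \<longleftrightarrow> is_partition lam \<and> lam (p + 1) \<le> n"

definition conj_part :: "(nat \<Rightarrow> nat) \<Rightarrow> nat \<Rightarrow> nat" where
  "conj_part lam i = card {j. 1 \<le> j \<and> i \<le> lam j}"

(* bar lambda^{p|n}; natural-number subtraction a - b equals <a - b> = max(a-b,0) *)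
fun lam_bar_pn :: "nat \<Rightarrow> nat \<Rightarrow> (nat \<Rightarrow> nat) \<Rightarrow> idx \<Rightarrow> complex" where
  "lam_bar_pn p n lam (Ev i) = (if i \<le> p then of_nat (lam i) else 0)"
| "lam_bar_pn p n lam (Od k) = of_nat (conj_part lam k - p)"

fun lam_bar_sigma :: "nat \<Rightarrow> nat \<Rightarrow> (nat \<Rightarrow> nat) \<Rightarrow> idx \<Rightarrow> complex" where
  "lam_bar_sigma p n lam (Ev i) = (if i \<le> p then of_nat (lam i) else of_nat (lam i - n))"
| "lam_bar_sigma p n lam (Od k) = of_nat (conj_part lam k - p)"

end

theory Submission
  imports Defs
begin

lemma lin_scale:
  assumes "Vector_Spaces.linear sc sc f"
  shows "f (sc c x) = sc c (f x)"
  using assms unfolding linear_iff_module_hom by (rule module_hom.scale)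

lemma part_mono:
  assumes "is_partition lam" "1 \<le> a" "a \<le> b"
  shows "lam b \<le> lam a"
  using assms(3)
proof (induction b rule: dec_induct)
  case base then show ?case by simp
next
  case (step k)
  have "lam (Suc k) \<le> lam k" using assms(1,2) step(1) unfolding is_partition_def by auto
  then show ?case using step by simp
qed

lemma Idx_p_sub: "p \<le> m \<Longrightarrow> Idx p n \<subseteq> Idx m n"
  unfolding Idx_def by auto

theorem corollary3p13:
  fixes m n p :: nat
    and sc :: "complex \<Rightarrow> 'v::ab_group_add \<Rightarrow> 'v"
    and E :: "idx \<Rightarrow> idx \<Rightarrow> 'v \<Rightarrow> 'v"
    and V :: "bool \<Rightarrow> 'v set"
    and lam :: "nat \<Rightarrow> nat"
  assumes "1 \<le> p" and "p \<le> m"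
    and "is_glmn_module m n sc E V"
    and "polynomial_module m n sc E"
    and "hook_partition p n lam"
  shows "tr_sing m n p sc E (lam_bar_pn p n lam) = sigma_sing m n p sc E (lam_bar_sigma p n lam)"
proof -
  note mod = assms(3)[unfolded is_glmn_module_def]
  have vs: "vector_space sc" using mod by (rule conjunct1)
  note C2 = mod[THEN conjunct2]
  note LIN = C2[THEN conjunct1]
  note COMM = C2[THEN conjunct2, THEN conjunct2, THEN conjunct2, THEN conjunct2, THEN conjunct2, THEN conjunct2]
  interpret vector_space sc by (rule vs)
  have lin: "\<And>i j. i \<in> Idx m n \<Longrightarrow> j \<in> Idx m n \<Longrightarrow> Vector_Spaces.linear sc sc (E i j)"
    using LIN by blast
  have comm: "\<And>i j k l v. i \<in> Idx m n \<Longrightarrow> j \<in> Idx m n \<Longrightarrow> k \<in> Idx m n \<Longrightarrow> l \<in> Idx m n \<Longrightarrow>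
        (let s = (\<lambda>x. if (ipar i \<noteq> ipar j) \<and> (ipar k \<noteq> ipar l) then - x else x) in
         E i j (E k l v) - s (E k l (E i j v))
           = (if j = k then E i l v else 0) - s (if l = i then E k j v else 0))"
    using COMM by blast
  have poly: "\<And>\<mu>. weight_space m n sc E \<mu> \<noteq> {0} \<Longrightarrow> (\<forall>i\<in>Idx m n. \<mu> i \<in> \<nat>)"
    using assms(4) unfolding polynomial_module_def by blast
  have part: "is_partition lam" and hook: "lam (p+1) \<le> n"
    using assms(5) unfolding hook_partition_def by auto
  let ?mu = "lam_bar_sigma p n lam"
  have zero_hi: "?mu (Ev b) = 0" if "p < b" for b
  proof -
    have "lam b \<le> lam (p+1)" using part_mono[OF part, of "p+1" b] that by simp
    then show ?thesis using hook that by simp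
  qed
  have agree: "lam_bar_pn p n lam i = ?mu i" if "i \<in> Idx p n" for i
    using that unfolding Idx_def by auto
  have sub: "Idx p n \<subseteq> Idx m n" using Idx_p_sub[OF assms(2)] .
  have shift: "E k k (E i j v) = sc (\<mu> k + (if k = i then 1 else 0) - (if k = j then 1 else 0)) (E i j v)"
    if "v \<in> weight_space m n sc E \<mu>" "i \<in> Idx m n" "j \<in> Idx m n" "k \<in> Idx m n" for \<mu> v i j k
  proof -
    have c: "E k k (E i j v) - E i j (E k k v) = (if k = i then E k j v else 0) - (if j = k then E i k v else 0)"
      using comm[OF that(4) that(4) that(2) that(3), of v] by (simp add: Let_def)
    have "E i j (E k k v) = sc (\<mu> k) (E i j v)"
      using that(1,4) lin_scale[OF lin[OF that(2,3)]] unfolding weight_space_def by auto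
    then have "E k k (E i j v) = sc (\<mu> k) (E i j v) + (if k = i then E i j v else 0) - (if j = k then E i j v else 0)"
      using c by (auto simp: algebra_simps)
    then show ?thesis by (auto simp: scale_left_distrib scale_left_diff_distrib)
  qed
  show ?thesis
  proof
    show "tr_sing m n p sc E (lam_bar_pn p n lam) \<subseteq> sigma_sing m n p sc E ?mu"
    proof
      fix v assume v: "v \<in> tr_sing m n p sc E (lam_bar_pn p n lam)"
      have tr: "v \<in> trbar m n p sc E" using v unfolding tr_sing_def by auto
      have hi: "E (Ev b) (Ev b) v = 0" if "p < b" "b \<le> m" for b
      proof -
        have L: "Vector_Spaces.linear sc sc (E (Ev b) (Ev b))"
          using lin that unfolding Idx_def by auto
        have "span (\<Union>{weight_space m n sc E \<nu> |\<nu>. \<forall>i. p < i \<and> i \<le> m \<longrightarrow> \<nu> (Ev i) = 0})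
              \<subseteq> {x. E (Ev b) (Ev b) x = 0}"
        proof (rule span_minimal)
          show "subspace {x. E (Ev b) (Ev b) x = 0}"
            using L unfolding linear_iff_module_hom by (rule module_hom.subspace_kernel)
          show "\<Union>{weight_space m n sc E \<nu> |\<nu>. \<forall>i. p < i \<and> i \<le> m \<longrightarrow> \<nu> (Ev i) = 0}
              \<subseteq> {x. E (Ev b) (Ev b) x = 0}"
          proof
            fix x assume "x \<in> \<Union>{weight_space m n sc E \<nu> |\<nu>. \<forall>i. p < i \<and> i \<le> m \<longrightarrow> \<nu> (Ev i) = 0}"
            then obtain \<nu> where "x \<in> weight_space m n sc E \<nu>" "\<forall>i. p < i \<and> i \<le> m \<longrightarrow> \<nu> (Ev i) = 0"
              by blast
            moreover have "Ev b \<in> Idx m n" using that assms(1) unfolding Idx_def by auto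
            ultimately show "x \<in> {x. E (Ev b) (Ev b) x = 0}" using that
              unfolding weight_space_def by auto
          qed
        qed
        then show ?thesis using tr unfolding trbar_def by blast
      qed
      have wt: "v \<in> weight_space m n sc E ?mu"
        unfolding weight_space_def
      proof (intro CollectI ballI)
        fix i assume i: "i \<in> Idx m n"
        show "E i i v = sc (?mu i) v"
        proof (cases "i \<in> Idx p n")
          case True
          then show ?thesis using v agree[OF True] unfolding tr_sing_def by auto
        next
          case False
          then obtain b where "i = Ev b" "p < b" "b \<le> m" using i unfolding Idx_def by auto
          then show ?thesis using hi zero_hi by simp
        qed
      qed
      show "v \<in> sigma_sing m n p sc E ?mu"
        unfolding sigma_sing_def
      proof (intro CollectI conjI ballI impI wt)
        fix i j assume i: "i \<in> Idx m n" and j: "j \<in> Idx m n" and ij: "sig_less p i j"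
        show "E i j v = 0"
        proof (cases "i \<in> Idx p n \<and> j \<in> Idx p n")
          case True
          then have "std_less i j" using ij unfolding Idx_def by auto
          then show ?thesis using v True unfolding tr_sing_def by auto
        next
          case False
          then obtain b where jb: "j = Ev b" "p < b" "b \<le> m" "i \<noteq> j"
            using i j ij unfolding Idx_def by (auto split: if_splits)
          define \<mu>' where "\<mu>' = (\<lambda>k. ?mu k + (if k = i then 1 else 0) - (if k = j then 1 else 0))"
          have w: "E i j v \<in> weight_space m n sc E \<mu>'"
            unfolding weight_space_def \<mu>'_def using shift[OF wt i j] by auto
          have "\<mu>' j = -1" unfolding \<mu>'_def using jb zero_hi by simp
          have "\<mu>' j \<notin> \<nat>"
          proof
            assume "\<mu>' j \<in> \<nat>"
            then obtain k :: nat where "\<mu>' j = of_nat k" by (auto elim: Nats_cases)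
            then have "Re (\<mu>' j) = real k" by simp
            with \<open>\<mu>' j = -1\<close> show False by simp
          qed
          then have "weight_space m n sc E \<mu>' = {0}" using poly j by blast
          then show ?thesis using w by blast
        qed
      qed
    qed
  next
    show "sigma_sing m n p sc E ?mu \<subseteq> tr_sing m n p sc E (lam_bar_pn p n lam)"
    proof
      fix v assume v: "v \<in> sigma_sing m n p sc E ?mu"
      have wt: "v \<in> weight_space m n sc E ?mu" using v unfolding sigma_sing_def by auto
      have "v \<in> trbar m n p sc E"
        unfolding trbar_def
        by (rule span_base) (use wt zero_hi in blast)
      moreover have "\<forall>i\<in>Idx p n. E i i v = sc (lam_bar_pn p n lam i) v"
        using wt sub agree unfolding weight_space_def by auto
      moreover have "\<forall>i\<in>Idx p n. \<forall>j\<in>Idx p n. std_less i j \<longrightarrow> E i j v = 0"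
      proof (intro ballI impI)
        fix i j assume i: "i \<in> Idx p n" and j: "j \<in> Idx p n" and "std_less i j"
        then have "sig_less p i j" unfolding Idx_def by auto
        then show "E i j v = 0" using v i j sub unfolding sigma_sing_def by blast
      qed
      ultimately show "v \<in> tr_sing m n p sc E (lam_bar_pn p n lam)"
        unfolding tr_sing_def by blast
    qed
  qed
qed

end
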